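(* Consider the single-armed lazy restless bandit described in the context. If $\rho_0<\rho_1$, $R_0<R_1$ and $\beta\in(0,1/3)$, then the bandit is indexable: for $\eta\in\mathbb{R}$ let $\mathcal{P}_\beta(\eta)=\{\pi\in[0,1]: V_S(\pi,\eta)\le V_{NS}(\pi,\eta)\}$; then $\mathcal{P}_\beta(\eta)$ increases monotonically from $\emptyset$ to $[0,1]$ as $\eta$ increases from $-\infty$ to $\infty$, i.e. $\mathcal{P}_\beta(\eta_1)\setminus\mathcal{P}_\beta(\eta_2)=\emptyset$ whenever $\eta_1\le\eta_2$.
   Context: Single-armed lazy restless bandit: an arm has a hidden state in $\{0,1\}$ evolving as a two-state Markov chain with transition probabilities $p_{i,j}$ ($i,j\in\{0,1\}$, $p_{i,0}+p_{i,1}=1$). Time is divided into sessions; during each session the chain makes exactly $K\ge1$ transitions ($K$ a fixed known integer). In each session the decision maker either plays the arm or does not. If played and the arm is in state $i$ at the start of the session, an ACK is received at the end with probability $\rho_i\in[0,1]$ and the expected reward is $R_i\in\mathbb{R}$; if not played, a subsidy $\eta\in\mathbb{R}$ is received and nothing is observed. Discount factor $\beta\in(0,1)$. The belief $\pi\in[0,1]$ is the probability that the arm is in state $0$. Define $R_S(\pi)=\pi R_0+(1-\pi)R_1$, $\rho(\pi)=\pi\rho_0+(1-\pi)\rho_1$, $\gamma_1(\pi)=\frac{(1-\pi)\rho_1p_{1,0}+\pi\rho_0p_{0,0}}{\rho_1(1-\pi)+\rho_0\pi}$, $\gamma_0(\pi)=\frac{(1-\pi)(1-\rho_1)p_{1,0}+\pi(1-\rho_0)p_{0,0}}{(1-\rho_1)(1-\pi)+(1-\rho_0)\pi}$,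 $\gamma_2(\pi)=(p_{0,0}-p_{1,0})^K\pi+p_{1,0}\sum_{j=0}^{K-1}(p_{0,0}-p_{1,0})^j$. For each $\eta$, the value functions $V_S(\cdot,\eta),V_{NS}(\cdot,\eta),V(\cdot,\eta)$ on $[0,1]$ are the unique bounded solution of $V_S(\pi,\eta)=R_S(\pi)+\beta\big(\rho(\pi)V(\gamma_1(\pi),\eta)+(1-\rho(\pi))V(\gamma_0(\pi),\eta)\big)$, $V_{NS}(\pi,\eta)=\eta+\beta V(\gamma_2(\pi),\eta)$, $V(\pi,\eta)=\max\{V_S(\pi,\eta),V_{NS}(\pi,\eta)\}$ (a term with zero coefficient is taken to be $0$). *)

theory Defs
  imports "HOL-Analysis.Analysis"
begin

text \<open>Parameters: p00 = p_{0,0}, p10 = p_{1,0}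
  (so p_{0,1} = 1 - p00, p_{1,1} = 1 - p10), ACK probabilities rho0, rho1,
  expected rewards R0, R1, number K of transitions per session.
  The belief pi is the probability that the arm is in state 0.\<close>

definition RS :: "real \<Rightarrow> real \<Rightarrow> real \<Rightarrow> real" where
  "RS R0 R1 \<pi> = \<pi> * R0 + (1 - \<pi>) * R1"

definition rhoS :: "real \<Rightarrow> real \<Rightarrow> real \<Rightarrow> real" where
  "rhoS rho0 rho1 \<pi> = \<pi> * rho0 + (1 - \<pi>) * rho1"

definition gamma1 :: "real \<Rightarrow> real \<Rightarrow> real \<Rightarrow> real \<Rightarrow> real \<Rightarrow> real" where
  "gamma1 p00 p10 rho0 rho1 \<pi> =
     ((1 - \<pi>) * rho1 * p10 + \<pi> * rho0 * p00) / (rho1 * (1 - \<pi>) + rho0 * \<pi>)"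

definition gamma0 :: "real \<Rightarrow> real \<Rightarrow> real \<Rightarrow> real \<Rightarrow> real \<Rightarrow> real" where
  "gamma0 p00 p10 rho0 rho1 \<pi> =
     ((1 - \<pi>) * (1 - rho1) * p10 + \<pi> * (1 - rho0) * p00)
       / ((1 - rho1) * (1 - \<pi>) + (1 - rho0) * \<pi>)"

definition gamma2 :: "real \<Rightarrow> real \<Rightarrow> nat \<Rightarrow> real \<Rightarrow> real" where
  "gamma2 p00 p10 K \<pi> = (p00 - p10) ^ K * \<pi> + p10 * (\<Sum>j<K. (p00 - p10) ^ j)"

text \<open>(VS, VNS, V) is a bounded (on [0,1]) solution of the Bellman system for subsidy eta.
  A term with zero coefficient is 0 automatically here (the coefficient multiplies a finite value).\<close>

definition bandit_solution ::
  "real \<Rightarrow> real \<Rightarrow> real \<Rightarrow> real \<Rightarrow> real \<Rightarrow> real \<Rightarrow> nat \<Rightarrow> real \<Rightarrow> real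
   \<Rightarrow> (real \<Rightarrow> real) \<Rightarrow> (real \<Rightarrow> real) \<Rightarrow> (real \<Rightarrow> real) \<Rightarrow> bool" where
  "bandit_solution p00 p10 rho0 rho1 R0 R1 K \<beta> \<eta> VS VNS V \<longleftrightarrow>
     (\<exists>B. \<forall>\<pi>\<in>{0..1}. \<bar>VS \<pi>\<bar> \<le> B \<and> \<bar>VNS \<pi>\<bar> \<le> B \<and> \<bar>V \<pi>\<bar> \<le> B) \<and>
     (\<forall>\<pi>\<in>{0..1}.
        VS \<pi> = RS R0 R1 \<pi> + \<beta> * (rhoS rho0 rho1 \<pi> * V (gamma1 p00 p10 rho0 rho1 \<pi>)
                   + (1 - rhoS rho0 rho1 \<pi>) * V (gamma0 p00 p10 rho0 rho1 \<pi>)) \<and>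
        VNS \<pi> = \<eta> + \<beta> * V (gamma2 p00 p10 K \<pi>) \<and>
        V \<pi> = max (VS \<pi>) (VNS \<pi>))"

end

theory Submission
  imports Defs
begin


lemma g1_range:
  assumes "0 \<le> p00" "p00 \<le> 1" "0 \<le> p10" "p10 \<le> 1"
    "0 \<le> rho0" "rho0 \<le> 1" "0 \<le> rho1" "rho1 \<le> 1" "0 \<le> \<pi>" "\<pi> \<le> 1"
  shows "gamma1 p00 p10 rho0 rho1 \<pi> \<in> {0..1}"
proof -
  let ?n = "(1 - \<pi>) * rho1 * p10 + \<pi> * rho0 * p00"
  let ?d = "rho1 * (1 - \<pi>) + rho0 * \<pi>"
  have a: "(1 - \<pi>) * rho1 * p10 \<le> (1 - \<pi>) * rho1" 
    using assms by (intro mult_left_le) auto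
  have b: "\<pi> * rho0 * p00 \<le> \<pi> * rho0"
    using assms by (intro mult_left_le) auto
  have n0: "0 \<le> ?n" using assms by auto
  have nd: "?n \<le> ?d" using a b by (simp add: algebra_simps)
  show ?thesis
  proof (cases "?d = 0")
    case True then show ?thesis by (simp add: gamma1_def)
  next
    case False
    then have "?d > 0" using assms n0 nd by linarith
    then show ?thesis using n0 nd by (simp add: gamma1_def divide_le_eq_1)
  qed
qed

lemma g0_range:
  assumes "0 \<le> p00" "p00 \<le> 1" "0 \<le> p10" "p10 \<le> 1"
    "0 \<le> rho0" "rho0 \<le> 1" "0 \<le> rho1" "rho1 \<le> 1" "0 \<le> \<pi>" "\<pi> \<le> 1"
  shows "gamma0 p00 p10 rho0 rho1 \<pi> \<in> {0..1}"
proof -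
  let ?n = "(1 - \<pi>) * (1 - rho1) * p10 + \<pi> * (1 - rho0) * p00"
  let ?d = "(1 - rho1) * (1 - \<pi>) + (1 - rho0) * \<pi>"
  have a: "(1 - \<pi>) * (1 - rho1) * p10 \<le> (1 - \<pi>) * (1 - rho1)" 
    using assms by (intro mult_left_le) auto
  have b: "\<pi> * (1 - rho0) * p00 \<le> \<pi> * (1 - rho0)"
    using assms by (intro mult_left_le) auto
  have n0: "0 \<le> ?n" using assms by auto
  have nd: "?n \<le> ?d" using a b by (simp add: algebra_simps)
  show ?thesis
  proof (cases "?d = 0")
    case True then show ?thesis by (simp add: gamma0_def)
  next
    case False
    then have "?d > 0" using assms n0 nd by linarith
    then show ?thesis using n0 nd by (simp add: gamma0_def divide_le_eq_1)
  qed
qed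

lemma g2_range:
  assumes "0 \<le> p00" "p00 \<le> 1" "0 \<le> p10" "p10 \<le> 1" "0 \<le> \<pi>" "\<pi> \<le> 1"
  shows "gamma2 p00 p10 K \<pi> \<in> {0..1}"
proof (induction K)
  case 0 then show ?case using assms by (simp add: gamma2_def)
next
  case (Suc K)
  let ?x = "gamma2 p00 p10 K \<pi>"
  define a where "a = p00 - p10"
  define S where "S = (\<Sum>j<K. a ^ j)"
  have x: "?x = a ^ K * \<pi> + p10 * S" unfolding gamma2_def a_def S_def by simp
  have sS: "(\<Sum>j<Suc K. a ^ j) = 1 + a * S" unfolding S_def
    by (subst sum.lessThan_Suc_shift) (simp add: sum_distrib_left)
  have x2: "gamma2 p00 p10 (Suc K) \<pi> = a ^ Suc K * \<pi> + p10 * (1 + a * S)"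
    unfolding gamma2_def a_def[symmetric] sS by simp
  have eq: "gamma2 p00 p10 (Suc K) \<pi> = p00 * ?x + p10 * (1 - ?x)"
    unfolding x2 x a_def by (simp add: algebra_simps)
  have "p00 * ?x \<le> ?x" "p10 * (1 - ?x) \<le> 1 - ?x" using Suc assms
    by (auto intro: mult_left_le_one_le)
  moreover have "0 \<le> p00 * ?x" "0 \<le> p10 * (1 - ?x)" using Suc assms by auto
  ultimately show ?case unfolding eq by auto
qed


lemma rho_range:
  assumes "0 \<le> rho0" "rho0 \<le> 1" "0 \<le> rho1" "rho1 \<le> 1" "0 \<le> \<pi>" "\<pi> \<le> 1"
  shows "0 \<le> rhoS rho0 rho1 \<pi>" "rhoS rho0 rho1 \<pi> \<le> 1"
proof -
  have "\<pi> * rho0 \<le> \<pi>" "(1-\<pi>) * rho1 \<le> 1 - \<pi>" using assms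
    by (auto intro: mult_left_le)
  then show "rhoS rho0 rho1 \<pi> \<le> 1" by (simp add: rhoS_def)
  show "0 \<le> rhoS rho0 rho1 \<pi>" using assms by (simp add: rhoS_def)
qed

lemma max_diff:
  fixes a1 b1 a2 b2 :: real
  shows "max a2 b2 - max a1 b1 \<le> max (a2 - a1) (b2 - b1)"
    "min (a2 - a1) (b2 - b1) \<le> max a2 b2 - max a1 b1"
  by (auto simp: max_def min_def)

lemma key:
  assumes p: "0 \<le> p00" "p00 \<le> 1" "0 \<le> p10" "p10 \<le> 1"
    "0 \<le> rho0" "rho0 \<le> 1" "0 \<le> rho1" "rho1 \<le> 1"
    and bet: "0 < \<beta>" "\<beta> < 1"
    and s1: "bandit_solution p00 p10 rho0 rho1 R0 R1 K \<beta> \<eta>1 VS1 VNS1 V1"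
    and s2: "bandit_solution p00 p10 rho0 rho1 R0 R1 K \<beta> \<eta>2 VS2 VNS2 V2"
    and le: "\<eta>1 \<le> \<eta>2"
  shows "\<forall>\<pi>\<in>{0..1}. 0 \<le> V2 \<pi> - V1 \<pi> \<and> V2 \<pi> - V1 \<pi> \<le> (\<eta>2 - \<eta>1) / (1 - \<beta>)"
proof -
  obtain B1 where B1: "\<forall>\<pi>\<in>{0..1}. \<bar>V1 \<pi>\<bar> \<le> B1" using s1 unfolding bandit_solution_def by blast
  obtain B2 where B2: "\<forall>\<pi>\<in>{0..1}. \<bar>V2 \<pi>\<bar> \<le> B2" using s2 unfolding bandit_solution_def by blast
  have e1: "\<forall>\<pi>\<in>{0..1}.
        VS1 \<pi> = RS R0 R1 \<pi> + \<beta> * (rhoS rho0 rho1 \<pi> * V1 (gamma1 p00 p10 rho0 rho1 \<pi>)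
                   + (1 - rhoS rho0 rho1 \<pi>) * V1 (gamma0 p00 p10 rho0 rho1 \<pi>)) \<and>
        VNS1 \<pi> = \<eta>1 + \<beta> * V1 (gamma2 p00 p10 K \<pi>) \<and>
        V1 \<pi> = max (VS1 \<pi>) (VNS1 \<pi>)" using s1 unfolding bandit_solution_def by blast
  have e2: "\<forall>\<pi>\<in>{0..1}.
        VS2 \<pi> = RS R0 R1 \<pi> + \<beta> * (rhoS rho0 rho1 \<pi> * V2 (gamma1 p00 p10 rho0 rho1 \<pi>)
                   + (1 - rhoS rho0 rho1 \<pi>) * V2 (gamma0 p00 p10 rho0 rho1 \<pi>)) \<and>
        VNS2 \<pi> = \<eta>2 + \<beta> * V2 (gamma2 p00 p10 K \<pi>) \<and>
        V2 \<pi> = max (VS2 \<pi>) (VNS2 \<pi>)" using s2 unfolding bandit_solution_def by blast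
  define \<Delta> where "\<Delta> = (\<lambda>\<pi>. V2 \<pi> - V1 \<pi>)"
  define S where "S = \<Delta> ` {0..1}"
  define d where "d = \<eta>2 - \<eta>1"
  have d0: "0 \<le> d" using le d_def by simp
  have ne: "S \<noteq> {}" unfolding S_def by auto
  have bdd: "\<forall>x\<in>S. \<bar>x\<bar> \<le> B1 + B2"
  proof
    fix x assume "x \<in> S"
    then obtain y where y: "y \<in> {0..1}" "x = V2 y - V1 y" unfolding S_def \<Delta>_def by auto
    have "\<bar>V1 y\<bar> \<le> B1" "\<bar>V2 y\<bar> \<le> B2" using B1 B2 y by auto
    then show "\<bar>x\<bar> \<le> B1 + B2" using y by arith
  qed
  have ba: "bdd_above S" using bdd by (intro bdd_aboveI[of _ "B1+B2"]) auto
  have bb: "bdd_below S" using bdd by (intro bdd_belowI[of _ "-(B1+B2)"]) force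
  define M where "M = Sup S"
  define m where "m = Inf S"
  have up: "\<Delta> x \<le> M" "m \<le> \<Delta> x" if "x \<in> {0..1}" for x
    using that ba bb unfolding M_def m_def S_def
    by (auto intro: cSup_upper cInf_lower)
  have step: "\<Delta> \<pi> \<le> d + \<beta> * M \<and> \<beta> * m \<le> \<Delta> \<pi>" if \<pi>: "\<pi> \<in> {0..1}" for \<pi>
  proof -
    let ?r = "rhoS rho0 rho1 \<pi>"
    let ?g1 = "gamma1 p00 p10 rho0 rho1 \<pi>"
    let ?g0 = "gamma0 p00 p10 rho0 rho1 \<pi>"
    let ?g2 = "gamma2 p00 p10 K \<pi>"
    have r: "0 \<le> ?r" "?r \<le> 1" using rho_range p \<pi> by auto
    have g: "?g1 \<in> {0..1}" "?g0 \<in> {0..1}" "?g2 \<in> {0..1}"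
      using g1_range g0_range g2_range p \<pi> by auto
    note E1 = bspec[OF e1 \<pi>] and E2 = bspec[OF e2 \<pi>]
    have dS: "VS2 \<pi> - VS1 \<pi> = \<beta> * (?r * \<Delta> ?g1 + (1 - ?r) * \<Delta> ?g0)"
      unfolding \<Delta>_def conjunct1[OF E1] conjunct1[OF E2] by (simp add: algebra_simps)
    have dN: "VNS2 \<pi> - VNS1 \<pi> = d + \<beta> * \<Delta> ?g2"
      using E1 E2 unfolding \<Delta>_def d_def by (simp add: algebra_simps)
    have dV: "\<Delta> \<pi> = max (VS2 \<pi>) (VNS2 \<pi>) - max (VS1 \<pi>) (VNS1 \<pi>)"
      using E1 E2 unfolding \<Delta>_def by simp
    have c1: "?r * \<Delta> ?g1 + (1 - ?r) * \<Delta> ?g0 \<le> ?r * M + (1 - ?r) * M"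
      using r up g by (intro add_mono mult_left_mono) auto
    have c2: "?r * m + (1 - ?r) * m \<le> ?r * \<Delta> ?g1 + (1 - ?r) * \<Delta> ?g0"
      using r up g by (intro add_mono mult_left_mono) auto
    have s_up: "VS2 \<pi> - VS1 \<pi> \<le> \<beta> * M"
      using dS mult_left_mono[OF c1, of \<beta>] bet by (simp add: algebra_simps)
    have s_lo: "\<beta> * m \<le> VS2 \<pi> - VS1 \<pi>"
      using dS mult_left_mono[OF c2, of \<beta>] bet by (simp add: algebra_simps)
    have n_up: "VNS2 \<pi> - VNS1 \<pi> \<le> d + \<beta> * M"
    proof -
      have "\<beta> * \<Delta> ?g2 \<le> \<beta> * M" using up(1)[OF g(3)] bet by (intro mult_left_mono) auto
      then show ?thesis using dN by linarith
    qed
    have n_lo: "\<beta> * m \<le> VNS2 \<pi> - VNS1 \<pi>"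
    proof -
      have "\<beta> * m \<le> \<beta> * \<Delta> ?g2" using up(2)[OF g(3)] bet by (intro mult_left_mono) auto
      then show ?thesis using dN d0 by linarith
    qed
    show ?thesis using dV max_diff[of "VS2 \<pi>" "VNS2 \<pi>" "VS1 \<pi>" "VNS1 \<pi>"] s_up s_lo n_up n_lo d0 bet
      by (auto simp: max_def min_def)
  qed
  have "M \<le> d + \<beta> * M" unfolding M_def
    using ne step unfolding S_def M_def by (intro cSup_least) auto
  then have Mb: "M \<le> d / (1 - \<beta>)" using bet by (simp add: field_simps)
  have "\<beta> * m \<le> m" unfolding m_def
  proof (rule cInf_greatest)
    show "S \<noteq> {}" by (rule ne)
    fix x assume "x \<in> S"
    then obtain y where "y \<in> {0..1}" "x = \<Delta> y" unfolding S_def by auto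
    then show "\<beta> * Inf S \<le> x" using step m_def by auto
  qed
  then have "0 \<le> (1 - \<beta>) * m" by (simp add: algebra_simps)
  then have mb: "0 \<le> m" using bet by (simp add: zero_le_mult_iff)
  show ?thesis using up Mb mb unfolding \<Delta>_def d_def by force
qed

theorem theorem2:
  fixes p00 p10 rho0 rho1 R0 R1 \<beta> :: real and K :: nat
    and VS VNS V :: "real \<Rightarrow> real \<Rightarrow> real"
  assumes "0 \<le> p00" "p00 \<le> 1" "0 \<le> p10" "p10 \<le> 1"
    and "0 \<le> rho0" "rho0 \<le> 1" "0 \<le> rho1" "rho1 \<le> 1"
    and "K \<ge> 1"
    and "0 < \<beta>" "\<beta> < 1/3"
    and "rho0 < rho1" "R0 < R1"
    and sol: "\<And>\<eta>. bandit_solution p00 p10 rho0 rho1 R0 R1 K \<beta> \<eta> (VS \<eta>) (VNS \<eta>) (V \<eta>)"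
  defines "P \<equiv> \<lambda>\<eta>. {\<pi> \<in> {0..1::real}. VS \<eta> \<pi> \<le> VNS \<eta> \<pi>}"
  shows "(\<forall>\<eta>1 \<eta>2. \<eta>1 \<le> \<eta>2 \<longrightarrow> P \<eta>1 - P \<eta>2 = {})
         \<and> (\<exists>\<eta>. P \<eta> = {}) \<and> (\<exists>\<eta>. P \<eta> = {0..1})"
proof -
  have p: "0 \<le> p00" "p00 \<le> 1" "0 \<le> p10" "p10 \<le> 1"
    "0 \<le> rho0" "rho0 \<le> 1" "0 \<le> rho1" "rho1 \<le> 1" using assms by auto
  have bet: "0 < \<beta>" "\<beta> < 1" using assms by auto
  define c where "c = (1 - 2 * \<beta>) / (1 - \<beta>)"
  have c0: "0 < c" unfolding c_def using assms by auto
  have mono: "VS \<eta>2 \<pi> - VNS \<eta>2 \<pi> \<le> VS \<eta>1 \<pi> - VNS \<eta>1 \<pi> - c * (\<eta>2 - \<eta>1)"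
    if le: "\<eta>1 \<le> \<eta>2" and \<pi>: "\<pi> \<in> {0..1}" for \<eta>1 \<eta>2 \<pi>
  proof -
    have K: "\<forall>\<pi>\<in>{0..1}. 0 \<le> V \<eta>2 \<pi> - V \<eta>1 \<pi> \<and> V \<eta>2 \<pi> - V \<eta>1 \<pi> \<le> (\<eta>2 - \<eta>1) / (1 - \<beta>)"
      by (rule key[OF p bet sol sol le])
    have e1: "VS \<eta>1 \<pi> = RS R0 R1 \<pi> + \<beta> * (rhoS rho0 rho1 \<pi> * V \<eta>1 (gamma1 p00 p10 rho0 rho1 \<pi>)
                   + (1 - rhoS rho0 rho1 \<pi>) * V \<eta>1 (gamma0 p00 p10 rho0 rho1 \<pi>)) \<and>
        VNS \<eta>1 \<pi> = \<eta>1 + \<beta> * V \<eta>1 (gamma2 p00 p10 K \<pi>)"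
      using sol[of \<eta>1] \<pi> unfolding bandit_solution_def by blast
    have e2: "VS \<eta>2 \<pi> = RS R0 R1 \<pi> + \<beta> * (rhoS rho0 rho1 \<pi> * V \<eta>2 (gamma1 p00 p10 rho0 rho1 \<pi>)
                   + (1 - rhoS rho0 rho1 \<pi>) * V \<eta>2 (gamma0 p00 p10 rho0 rho1 \<pi>)) \<and>
        VNS \<eta>2 \<pi> = \<eta>2 + \<beta> * V \<eta>2 (gamma2 p00 p10 K \<pi>)"
      using sol[of \<eta>2] \<pi> unfolding bandit_solution_def by blast
    define \<Delta> where "\<Delta> = (\<lambda>x. V \<eta>2 x - V \<eta>1 x)"
    define d where "d = \<eta>2 - \<eta>1"
    let ?r = "rhoS rho0 rho1 \<pi>"
    let ?g1 = "gamma1 p00 p10 rho0 rho1 \<pi>"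
    let ?g0 = "gamma0 p00 p10 rho0 rho1 \<pi>"
    let ?g2 = "gamma2 p00 p10 K \<pi>"
    have r: "0 \<le> ?r" "?r \<le> 1" using rho_range p \<pi> by auto
    have g: "?g1 \<in> {0..1}" "?g0 \<in> {0..1}" "?g2 \<in> {0..1}"
      using g1_range g0_range g2_range p \<pi> by auto
    have dS: "VS \<eta>2 \<pi> - VS \<eta>1 \<pi> = \<beta> * (?r * \<Delta> ?g1 + (1 - ?r) * \<Delta> ?g0)"
      unfolding \<Delta>_def conjunct1[OF e1] conjunct1[OF e2] by (simp add: algebra_simps)
    have dN: "VNS \<eta>2 \<pi> - VNS \<eta>1 \<pi> = d + \<beta> * \<Delta> ?g2"
      using e1 e2 unfolding \<Delta>_def d_def by (simp add: algebra_simps)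
    have c1: "?r * \<Delta> ?g1 + (1 - ?r) * \<Delta> ?g0 \<le> ?r * (d / (1-\<beta>)) + (1 - ?r) * (d / (1-\<beta>))"
      using r K g unfolding \<Delta>_def d_def by (intro add_mono mult_left_mono) auto
    have s_up: "VS \<eta>2 \<pi> - VS \<eta>1 \<pi> \<le> \<beta> * (d / (1-\<beta>))"
      using dS mult_left_mono[OF c1, of \<beta>] bet by (simp add: algebra_simps)
    have n_lo: "d \<le> VNS \<eta>2 \<pi> - VNS \<eta>1 \<pi>"
      using dN K g(3) bet unfolding \<Delta>_def by simp
    have "\<beta> * (d / (1-\<beta>)) - d = - c * d" unfolding c_def using bet
      by (simp add: field_simps)
    then show ?thesis using s_up n_lo unfolding d_def by simp
  qed
  obtain B0 where B0: "\<forall>\<pi>\<in>{0..1}. \<bar>VS 0 \<pi>\<bar> \<le> B0 \<and> \<bar>VNS 0 \<pi>\<bar> \<le> B0"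
    using sol[of 0] unfolding bandit_solution_def by blast
  define E where "E = (2 * B0 + 1) / c"
  have cE: "c * E = 2 * B0 + 1" unfolding E_def using c0 by simp
  have A: "\<forall>\<eta>1 \<eta>2. \<eta>1 \<le> \<eta>2 \<longrightarrow> P \<eta>1 - P \<eta>2 = {}"
  proof (intro allI impI)
    fix \<eta>1 \<eta>2 :: real assume le: "\<eta>1 \<le> \<eta>2"
    show "P \<eta>1 - P \<eta>2 = {}"
    proof (rule ccontr)
      assume "P \<eta>1 - P \<eta>2 \<noteq> {}"
      then obtain \<pi> where \<pi>: "\<pi> \<in> {0..1}" "VS \<eta>1 \<pi> \<le> VNS \<eta>1 \<pi>" "\<not> VS \<eta>2 \<pi> \<le> VNS \<eta>2 \<pi>"
        unfolding P_def by auto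
      have "0 \<le> c * (\<eta>2 - \<eta>1)" using c0 le by simp
      then show False using mono[OF le \<pi>(1)] \<pi> by linarith
    qed
  qed
  have Bm: "P (-E) = {}"
  proof -
    have "\<not> VS (-E) \<pi> \<le> VNS (-E) \<pi>" if \<pi>: "\<pi> \<in> {0..1}" for \<pi>
    proof -
      have "-E \<le> 0" using cE c0 B0 \<pi> by (smt (verit) mult_pos_neg)
      from mono[OF this \<pi>] have "VS 0 \<pi> - VNS 0 \<pi> \<le> VS (-E) \<pi> - VNS (-E) \<pi> - c * E"
        by (simp add: algebra_simps)
      moreover have "\<bar>VS 0 \<pi>\<bar> \<le> B0 \<and> \<bar>VNS 0 \<pi>\<bar> \<le> B0" using B0 \<pi> by blast
      ultimately show ?thesis using cE by arith
    qed
    then show ?thesis unfolding P_def by auto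
  qed
  have Bp: "P E = {0..1}"
  proof -
    have "VS E \<pi> \<le> VNS E \<pi>" if \<pi>: "\<pi> \<in> {0..1}" for \<pi>
    proof -
      have "0 \<le> E" using cE c0 B0 \<pi> by (smt (verit) mult_pos_neg)
      from mono[OF this \<pi>] have "VS E \<pi> - VNS E \<pi> \<le> VS 0 \<pi> - VNS 0 \<pi> - c * E"
        by (simp add: algebra_simps)
      moreover have "\<bar>VS 0 \<pi>\<bar> \<le> B0 \<and> \<bar>VNS 0 \<pi>\<bar> \<le> B0" using B0 \<pi> by blast
      ultimately show ?thesis using cE by arith
    qed
    then show ?thesis unfolding P_def by auto
  qed
  show ?thesis using A Bm Bp by blast
qed

end
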